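(* Let $S$ be a commutative ring, $X=\begin{pmatrix}a&b\\c&a\end{pmatrix}\in R=\mathbb{M}_2(S)$, and assume $bS+cS=rS$ for some $r\in S$. Then $$\{-\det[X,Y]: Y\in R\}=V[r^2,-bc].$$ If $b,c$ are coprime in $S$ (i.e. $bS+cS=S$), this set equals $V[1,-bc]$.
   Context: $[X,Y]=XY-YX$. For $s,\delta\in S$, $V[s,\delta]=\{s r_1^2+\delta r_2^2 : r_1,r_2\in S\}$. *)

theory Defs
  imports "HOL-Analysis.Analysis"
begin

text \<open>2x2 matrices over a commutative ring S are modelled as S^2^2
  (rows indexed by the type 2); the entries of mat2 a b c d are
  row 1 = (a, b), row 2 = (c, d).\<close>

definition mat2 :: "'a::comm_ring_1 \<Rightarrow> 'a \<Rightarrow> 'a \<Rightarrow> 'a \<Rightarrow> 'a^2^2" where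
  "mat2 a b c d = (\<chi> i j. if i = 1 then (if j = 1 then a else b) else (if j = 1 then c else d))"

definition commutator :: "'a::comm_ring_1^2^2 \<Rightarrow> 'a^2^2 \<Rightarrow> 'a^2^2" where
  "commutator X Y = X ** Y - Y ** X"

definition V :: "'a::comm_ring_1 \<Rightarrow> 'a \<Rightarrow> 'a set" where
  "V s \<delta> = {s * r1^2 + \<delta> * r2^2 | r1 r2. True}"

end

theory Submission
  imports Defs
begin

lemma key:
  fixes a b c :: "'a::comm_ring_1"
  shows "- det (commutator (mat2 a b c a) Y) = (b * Y$2$1 - c * Y$1$2)^2 - b*c*(Y$2$2 - Y$1$1)^2"
  by (simp add: det_2 commutator_def mat2_def matrix_matrix_mult_def sum_2 power2_eq_square algebra_simps)

lemma mat2_entries: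
  "(mat2 a b c d)$1$1 = a" "(mat2 a b c d)$1$2 = b" "(mat2 a b c d)$2$1 = c" "(mat2 a b c d)$2$2 = d"
  by (simp_all add: mat2_def)

lemma part1:
  fixes a b c r :: "'a::comm_ring_1"
  assumes h: "{b * x + c * y | x y. True} = {r * z | z. True}"
  shows "{- det (commutator (mat2 a b c a) Y) | Y. True} = V (r^2) (- (b * c))"
proof (rule set_eqI, rule iffI)
  fix v assume "v \<in> {- det (commutator (mat2 a b c a) Y) | Y. True}"
  then obtain Y where v: "v = - det (commutator (mat2 a b c a) Y)" by blast
  have "b * Y$2$1 + c * (- Y$1$2) \<in> {b * x + c * y | x y. True}" by blast
  then obtain z where z: "b * Y$2$1 + c * (- Y$1$2) = r * z" using h by blast
  have "v = r^2 * z^2 + (- (b*c)) * (Y$2$2 - Y$1$1)^2"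
  proof -
    have "b * Y$2$1 - c * Y$1$2 = r * z" using z by simp
    then show ?thesis unfolding v key by (simp add: power_mult_distrib)
  qed
  then show "v \<in> V (r^2) (- (b * c))" unfolding V_def by blast
next
  fix v assume "v \<in> V (r^2) (- (b * c))"
  then obtain r1 r2 where v: "v = r^2 * r1^2 + (- (b*c)) * r2^2" unfolding V_def by blast
  have "r * r1 \<in> {r * z | z. True}" by blast
  then obtain x y where xy: "r * r1 = b * x + c * y" using h by blast
  have "v = - det (commutator (mat2 a b c a) (mat2 0 (-y) x r2))"
    unfolding key mat2_entries v using xy
    by (simp add: power_mult_distrib[symmetric] algebra_simps)
  then show "v \<in> {- det (commutator (mat2 a b c a) Y) | Y. True}" by blast
qed

theorem proposition5p16:
  fixes a b c :: "'a::comm_ring_1"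
  shows "(\<forall>r. {b * x + c * y | x y. True} = {r * z | z. True} \<longrightarrow>
            {- det (commutator (mat2 a b c a) Y) | Y. True} = V (r^2) (- (b * c))) \<and>
         ({b * x + c * y | x y. True} = UNIV \<longrightarrow>
            {- det (commutator (mat2 a b c a) Y) | Y. True} = V 1 (- (b * c)))"
proof (intro conjI allI impI)
  fix r assume "{b * x + c * y | x y. True} = {r * z | z. True}"
  then show "{- det (commutator (mat2 a b c a) Y) | Y. True} = V (r^2) (- (b * c))" by (rule part1)
next
  assume h: "{b * x + c * y | x y. True} = UNIV"
  have "{b * x + c * y | x y. True} = {1 * z | z. True}" unfolding h by auto
  from part1[OF this] show "{- det (commutator (mat2 a b c a) Y) | Y. True} = V 1 (- (b * c))" by simp
qed

end
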